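(* HazardErasPOP, as described in the context, is safe from use-after-free errors: no node freed by a reclaiming thread is subsequently accessed by any thread.
   Context: Setting: an asynchronous shared-memory system with a fixed set of threads operating on a linked concurrent data structure; each unlinked node is retired by exactly one thread. HazardErasPOP: there is a shared monotonically increasing global epoch. Each node records a birth epoch (global epoch at allocation) and a retire epoch (global epoch when retired). Each thread has private local reservation slots holding epochs (value NONE when empty), a row of a shared array of reservation slots, a shared counter publishCounter, and a private retire list. To read a node pointer from an atomic location into a slot, a thread repeatedly loads the pointer and then the global epoch; if the loaded epoch equals the epoch held in its local slot it returns the pointer, otherwise it writes the new epoch into its local slot (no fence, not published) and retries. At the end of an operation local slots are set to NONE. On retire a thread sets the node's retire epoch, appends it to its retire list, and when the list reaches a threshold it increments the global epoch, records all threads' publishCounter values, sends a POSIX signal to every other thread (whose handler copies its local reserved epochs into its shared slots and increments its publishCounter), waits until every other thread's publishCounter has increased, collects all published epochs, and frees each retired node for which every published epoch $e$ is NONE, or $e <$ the node's birth epoch, or $e >$ the node's retire epoch. Assumption: after being signalled, a thread publishes its reservations within bounded time. *)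

theory Defs
  imports Main
begin

text \<open>
  Threads are the elements of a finite
  type 't, local/shared reservation slot indices are the elements of a finite
  type 'k, node identifiers are elements of type 'n.  Epoch reservations are
  of type nat option, where None plays the role of NONE.
  The linked data structure is abstracted: a pointer load from an atomic
  location (a root, or a field of a node the thread currently holds a
  protected reference to) returns null or a node that is currently in the
  data structure, i.e. allocated and not yet retired (a node is retired only
  after it has been unlinked).  A ghost flag uaf records whether any thread
  has ever accessed a freed node.
\<close>

datatype nstat = Unalloc | Alive | Retired | Freed

datatype ('t, 'n, 'k) pcs =
    Idle
  | InOp
  | RdPtr 'k                     \<comment> \<open>protected read into slot k: about to load the pointer\<close>
  | RdEp 'k "'n option"          \<comment> \<open>pointer loaded, about to load the global epoch\<close>
  | RecInc                       \<comment> \<open>reclamation: increment global epoch\<close>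
  | RecRecord                    \<comment> \<open>reclamation: record all publishCounters\<close>
  | RecSignal "'t set"           \<comment> \<open>reclamation: threads still to be signalled\<close>
  | RecWait                      \<comment> \<open>reclamation: wait for publication, then collect epochs\<close>
  | RecFree "nat set"            \<comment> \<open>reclamation: free using the collected epochs\<close>

record ('t, 'n, 'k) hstate =
  ge    :: nat                        \<comment> \<open>global epoch\<close>
  nst   :: "'n \<Rightarrow> nstat"
  birth :: "'n \<Rightarrow> nat"
  rete  :: "'n \<Rightarrow> nat"
  pc    :: "'t \<Rightarrow> ('t, 'n, 'k) pcs"
  loc   :: "'t \<Rightarrow> 'k \<Rightarrow> nat option"  \<comment> \<open>private local reservation slots\<close>
  shr   :: "'t \<Rightarrow> 'k \<Rightarrow> nat option"  \<comment> \<open>shared (published) reservation slots\<close>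
  cnt   :: "'t \<Rightarrow> nat"               \<comment> \<open>publishCounter\<close>
  pend  :: "'t \<Rightarrow> bool"              \<comment> \<open>pending (coalesced) POSIX signal\<close>
  snap  :: "'t \<Rightarrow> 't \<Rightarrow> nat"         \<comment> \<open>publishCounter values recorded by a reclaimer\<close>
  rlist :: "'t \<Rightarrow> 'n list"
  ref   :: "'t \<Rightarrow> 'k \<Rightarrow> 'n option"   \<comment> \<open>pointer obtained by the protected read into slot k\<close>
  uaf   :: bool

definition hinit :: "('t, 'n, 'k) hstate" where
  "hinit = \<lparr> ge = 0, nst = (\<lambda>_. Unalloc), birth = (\<lambda>_. 0), rete = (\<lambda>_. 0),
             pc = (\<lambda>_. Idle), loc = (\<lambda>_ _. None), shr = (\<lambda>_ _. None),
             cnt = (\<lambda>_. 0), pend = (\<lambda>_. False), snap = (\<lambda>_ _. 0),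
             rlist = (\<lambda>_. []), ref = (\<lambda>_ _. None), uaf = False \<rparr>"

definition setpc :: "'t \<Rightarrow> ('t, 'n, 'k) pcs \<Rightarrow> ('t, 'n, 'k) hstate \<Rightarrow> ('t, 'n, 'k) hstate" where
  "setpc t c s = s\<lparr>pc := (pc s)(t := c)\<rparr>"

definition freeable :: "nat set \<Rightarrow> ('t, 'n, 'k) hstate \<Rightarrow> 'n \<Rightarrow> bool" where
  "freeable E s n = (\<forall>e\<in>E. e < birth s n \<or> rete s n < e)"

definition collected :: "'t \<Rightarrow> ('t, 'n, 'k) hstate \<Rightarrow> nat set" where
  "collected t s = {e. \<exists>u k. shr s u k = Some e} \<union> {e. \<exists>k. loc s t k = Some e}"

text \<open>One atomic step of the system; R is the retire-list threshold.\<close>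
inductive hstep :: "nat \<Rightarrow> ('t::finite, 'n, 'k::finite) hstate \<Rightarrow> ('t, 'n, 'k) hstate \<Rightarrow> bool"
  for R :: nat where
  begin_op:
    "pc s t = Idle \<Longrightarrow> hstep R s (setpc t InOp s)"
| alloc:
    "pc s t = InOp \<Longrightarrow> nst s n = Unalloc \<Longrightarrow>
     hstep R s (s\<lparr>nst := (nst s)(n := Alive), birth := (birth s)(n := ge s)\<rparr>)"
| start_read:
    "pc s t = InOp \<Longrightarrow>
     hstep R s (setpc t (RdPtr i) (s\<lparr>ref := (ref s)(t := (ref s t)(i := None))\<rparr>))"
| load_ptr_root:
    "pc s t = RdPtr i \<Longrightarrow> (p = None \<or> (\<exists>n. p = Some n \<and> nst s n = Alive)) \<Longrightarrow>
     hstep R s (setpc t (RdEp i p) s)"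
| load_ptr_node:
    "pc s t = RdPtr i \<Longrightarrow> ref s t j = Some m \<Longrightarrow>
     (p = None \<or> (\<exists>n. p = Some n \<and> nst s n = Alive)) \<Longrightarrow>
     hstep R s (setpc t (RdEp i p) (s\<lparr>uaf := (uaf s \<or> nst s m = Freed)\<rparr>))"
| load_epoch_ok:
    "pc s t = RdEp i p \<Longrightarrow> loc s t i = Some (ge s) \<Longrightarrow>
     hstep R s (setpc t InOp (s\<lparr>ref := (ref s)(t := (ref s t)(i := p))\<rparr>))"
| load_epoch_retry:
    "pc s t = RdEp i p \<Longrightarrow> loc s t i \<noteq> Some (ge s) \<Longrightarrow>
     hstep R s (setpc t (RdPtr i) (s\<lparr>loc := (loc s)(t := (loc s t)(i := Some (ge s)))\<rparr>))"
| access: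
    "pc s t = InOp \<Longrightarrow> ref s t i = Some n \<Longrightarrow>
     hstep R s (s\<lparr>uaf := (uaf s \<or> nst s n = Freed)\<rparr>)"
| retire:
    "pc s t = InOp \<Longrightarrow> nst s n = Alive \<Longrightarrow>
     hstep R s (setpc t (if R \<le> Suc (length (rlist s t)) then RecInc else InOp)
       (s\<lparr>nst := (nst s)(n := Retired), rete := (rete s)(n := ge s),
          rlist := (rlist s)(t := n # rlist s t)\<rparr>))"
| end_op:
    "pc s t = InOp \<Longrightarrow>
     hstep R s (setpc t Idle (s\<lparr>loc := (loc s)(t := (\<lambda>_. None)), ref := (ref s)(t := (\<lambda>_. None))\<rparr>))"
| rec_inc:
    "pc s t = RecInc \<Longrightarrow> hstep R s (setpc t RecRecord (s\<lparr>ge := Suc (ge s)\<rparr>))"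
| rec_record:
    "pc s t = RecRecord \<Longrightarrow>
     hstep R s (setpc t (RecSignal (UNIV - {t})) (s\<lparr>snap := (snap s)(t := cnt s)\<rparr>))"
| rec_signal:
    "pc s t = RecSignal U \<Longrightarrow> u \<in> U \<Longrightarrow>
     hstep R s (setpc t (RecSignal (U - {u})) (s\<lparr>pend := (pend s)(u := True)\<rparr>))"
| rec_signal_done:
    "pc s t = RecSignal {} \<Longrightarrow> hstep R s (setpc t RecWait s)"
| rec_wait:
    "pc s t = RecWait \<Longrightarrow> (\<forall>u. u \<noteq> t \<longrightarrow> snap s t u < cnt s u) \<Longrightarrow>
     hstep R s (setpc t (RecFree (collected t s)) s)"
| rec_free:
    "pc s t = RecFree E \<Longrightarrow>
     hstep R s (setpc t InOp (s\<lparr>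
        nst := (\<lambda>n. if n \<in> set (rlist s t) \<and> freeable E s n then Freed else nst s n),
        rlist := (rlist s)(t := filter (\<lambda>n. \<not> freeable E s n) (rlist s t))\<rparr>))"
| handler:
    "pend s u \<Longrightarrow>
     hstep R s (s\<lparr>shr := (shr s)(u := loc s u), cnt := (cnt s)(u := Suc (cnt s u)),
                   pend := (pend s)(u := False)\<rparr>)"

definition reachable :: "nat \<Rightarrow> ('t::finite, 'n, 'k::finite) hstate \<Rightarrow> bool" where
  "reachable R s = (hstep R)\<^sup>*\<^sup>* hinit s"

end

theory Submission
  imports Defs
begin

fun inrec :: "('t, 'n, 'k) pcs \<Rightarrow> bool" where
  "inrec RecRecord = True"
| "inrec (RecSignal U) = True"
| "inrec RecWait = True"
| "inrec (RecFree E) = True"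
| "inrec _ = False"

fun insig :: "('t, 'n, 'k) pcs \<Rightarrow> bool" where
  "insig (RecSignal U) = True"
| "insig RecWait = True"
| "insig _ = False"

definition "J1 s = (\<forall>n. nst s n \<noteq> Unalloc \<longrightarrow> birth s n \<le> ge s)"
definition "J2 s = (\<forall>t i e. loc s t i = Some e \<longrightarrow> e \<le> ge s)"
definition "J3 s = (\<forall>t n. n \<in> set (rlist s t) \<longrightarrow> nst s n = Retired \<and> rete s n \<le> ge s)"
definition "J4 s = (\<forall>t u n. t \<noteq> u \<longrightarrow> n \<in> set (rlist s t) \<longrightarrow> n \<notin> set (rlist s u))"
definition "J5 s = (\<forall>t i n. ref s t i = Some n \<longrightarrow> (\<exists>e. loc s t i = Some e \<and> birth s n \<le> e \<and>
          (nst s n = Alive \<or> (nst s n = Retired \<and> e \<le> rete s n))))"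
definition "J6 s = (\<forall>t i. pc s t = RdPtr i \<longrightarrow> ref s t i = None)"
definition "J7 s = (\<forall>t i p. pc s t = RdEp i p \<longrightarrow> ref s t i = None)"
definition "J8 s = (\<forall>t i n. pc s t = RdEp i (Some n) \<longrightarrow> loc s t i = Some (ge s) \<longrightarrow>
          birth s n \<le> ge s \<and> (nst s n = Alive \<or> (nst s n = Retired \<and> ge s \<le> rete s n)))"
definition "J9 s = (\<forall>r. inrec (pc s r) \<longrightarrow> (\<forall>n \<in> set (rlist s r). rete s n < ge s))"
definition "J10 s = (\<forall>r t i e. insig (pc s r) \<longrightarrow> t \<noteq> r \<longrightarrow> snap s r t < cnt s t \<longrightarrow> loc s t i = Some e \<longrightarrow>
          shr s t i = Some e \<or> (\<forall>n\<in>set (rlist s r). rete s n < e))"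
definition "J11 s = (\<forall>r E t i e. pc s r = RecFree E \<longrightarrow> loc s t i = Some e \<longrightarrow>
          e \<in> E \<or> (\<forall>n\<in>set (rlist s r). rete s n < e))"

definition hinv :: "('t, 'n, 'k) hstate \<Rightarrow> bool" where
  "hinv s = (\<not> uaf s \<and> J1 s \<and> J2 s \<and> J3 s \<and> J4 s \<and> J5 s \<and> J6 s \<and> J7 s \<and> J8 s \<and> J9 s \<and> J10 s \<and> J11 s)"

lemma inv_init: "hinv hinit"
  by (simp add: hinv_def hinit_def J1_def J2_def J3_def J4_def J5_def J6_def J7_def J8_def J9_def J10_def J11_def)

lemma rec_wait_J11:
  assumes J10: "J10 s" and J11: "J11 s" and P: "pc s t = RecWait" and W: "\<forall>u. u \<noteq> t \<longrightarrow> snap s t u < cnt s u"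
  shows "J11 (setpc t (RecFree (collected t s)) s)"
  unfolding J11_def
proof (intro allI impI)
  fix r E u i e
  assume 1: "pc (setpc t (RecFree (collected t s)) s) r = RecFree E"
    and 2: "loc (setpc t (RecFree (collected t s)) s) u i = Some e"
  have l: "loc s u i = Some e" using 2 by (simp add: setpc_def)
  show "e \<in> E \<or> (\<forall>n\<in>set (rlist (setpc t (RecFree (collected t s)) s) r).
             rete (setpc t (RecFree (collected t s)) s) n < e)"
  proof (cases "r = t")
    case True
    then have E: "E = collected t s" using 1 by (simp add: setpc_def)
    show ?thesis
    proof (cases "u = t")
      case True
      then show ?thesis using l E by (auto simp: collected_def)
    next
      case False
      then have "snap s t u < cnt s u" using W by auto
      moreover have "insig (pc s t)" using P by simp
      ultimately have "shr s u i = Some e \<or> (\<forall>n\<in>set (rlist s t). rete s n < e)"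
        using J10 False l unfolding J10_def by blast
      then show ?thesis using E \<open>r = t\<close> by (auto simp: collected_def setpc_def)
    qed
  next
    case False
    then have "pc s r = RecFree E" using 1 by (simp add: setpc_def)
    then show ?thesis using J11 l unfolding J11_def by (simp add: setpc_def)
  qed
qed

lemma rec_free_J5:
  assumes J3: "J3 s" and J5: "J5 s" and J11: "J11 s" and P: "pc s t = RecFree E"
  shows "J5 (setpc t InOp (s\<lparr>nst := (\<lambda>n. if n \<in> set (rlist s t) \<and> freeable E s n then Freed else nst s n), rlist := (rlist s)(t := filter (\<lambda>n. \<not> freeable E s n) (rlist s t))\<rparr>))"
  unfolding J5_def
proof (intro allI impI)
  fix u i n
  assume "ref (setpc t InOp (s\<lparr>nst := (\<lambda>n. if n \<in> set (rlist s t) \<and> freeable E s n then Freed else nst s n), rlist := (rlist s)(t := filter (\<lambda>n. \<not> freeable E s n) (rlist s t))\<rparr>)) u i = Some n"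
  then have r: "ref s u i = Some n" by (simp add: setpc_def)
  then obtain e where e: "loc s u i = Some e" "birth s n \<le> e"
     "nst s n = Alive \<or> (nst s n = Retired \<and> e \<le> rete s n)"
    using J5 unfolding J5_def by blast
  have nf: "\<not> (n \<in> set (rlist s t) \<and> freeable E s n)"
  proof
    assume a: "n \<in> set (rlist s t) \<and> freeable E s n"
    then have "nst s n = Retired" using J3 unfolding J3_def by blast
    then have le: "e \<le> rete s n" using e by auto
    have "e \<in> E \<or> (\<forall>n\<in>set (rlist s t). rete s n < e)" using J11 P e(1) unfolding J11_def by blast
    then have "e \<in> E" using a le by auto
    then show False using a e(2) le unfolding freeable_def by fastforce
  qed
  show "\<exists>e. loc (setpc t InOp (s\<lparr>nst := (\<lambda>n. if n \<in> set (rlist s t) \<and> freeable E s n then Freed else nst s n), rlist := (rlist s)(t := filter (\<lambda>n. \<not> freeable E s n) (rlist s t))\<rparr>)) u i = Some e \<and>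
          birth (setpc t InOp (s\<lparr>nst := (\<lambda>n. if n \<in> set (rlist s t) \<and> freeable E s n then Freed else nst s n), rlist := (rlist s)(t := filter (\<lambda>n. \<not> freeable E s n) (rlist s t))\<rparr>)) n \<le> e \<and>
          (nst (setpc t InOp (s\<lparr>nst := (\<lambda>n. if n \<in> set (rlist s t) \<and> freeable E s n then Freed else nst s n), rlist := (rlist s)(t := filter (\<lambda>n. \<not> freeable E s n) (rlist s t))\<rparr>)) n = Alive \<or>
           (nst (setpc t InOp (s\<lparr>nst := (\<lambda>n. if n \<in> set (rlist s t) \<and> freeable E s n then Freed else nst s n), rlist := (rlist s)(t := filter (\<lambda>n. \<not> freeable E s n) (rlist s t))\<rparr>)) n = Retired \<and>
            e \<le> rete (setpc t InOp (s\<lparr>nst := (\<lambda>n. if n \<in> set (rlist s t) \<and> freeable E s n then Freed else nst s n), rlist := (rlist s)(t := filter (\<lambda>n. \<not> freeable E s n) (rlist s t))\<rparr>)) n))"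
    using e nf by (simp add: setpc_def)
qed

lemma rec_free_J8:
  assumes J3: "J3 s" and J8: "J8 s" and J9: "J9 s" and P: "pc s t = RecFree E"
  shows "J8 (setpc t InOp (s\<lparr>nst := (\<lambda>n. if n \<in> set (rlist s t) \<and> freeable E s n then Freed else nst s n), rlist := (rlist s)(t := filter (\<lambda>n. \<not> freeable E s n) (rlist s t))\<rparr>))"
  unfolding J8_def
proof (intro allI impI)
  fix u i n
  let ?s = "setpc t InOp (s\<lparr>nst := (\<lambda>n. if n \<in> set (rlist s t) \<and> freeable E s n then Freed else nst s n), rlist := (rlist s)(t := filter (\<lambda>n. \<not> freeable E s n) (rlist s t))\<rparr>)"
  assume a: "pc ?s u = RdEp i (Some n)" "loc ?s u i = Some (ge ?s)"
  then have "u \<noteq> t" by (auto simp: setpc_def split: if_splits)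
  then have b: "pc s u = RdEp i (Some n)" "loc s u i = Some (ge s)" using a by (simp_all add: setpc_def)
  then have c: "birth s n \<le> ge s \<and> (nst s n = Alive \<or> (nst s n = Retired \<and> ge s \<le> rete s n))"
    using J8 unfolding J8_def by blast
  have "n \<notin> set (rlist s t)"
  proof
    assume n: "n \<in> set (rlist s t)"
    moreover have "inrec (pc s t)" using P by simp
    ultimately have "rete s n < ge s" using J9 unfolding J9_def by blast
    moreover have "nst s n = Retired" using n J3 unfolding J3_def by blast
    ultimately show False using c by auto
  qed
  then show "birth ?s n \<le> ge ?s \<and> (nst ?s n = Alive \<or> (nst ?s n = Retired \<and> ge ?s \<le> rete ?s n))"
    using c by (simp add: setpc_def)
qed

lemma insig_inrec: "insig c \<Longrightarrow> inrec c"
  by (cases c) auto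


lemma retry_J11:
  assumes J9: "J9 s" and J11: "J11 s" and P: "pc s t = RdEp i p"
  shows "J11 (setpc t (RdPtr i) (s\<lparr>loc := (loc s)(t := (loc s t)(i := Some (ge s)))\<rparr>))"
  unfolding J11_def
proof (intro allI impI)
  fix r E u j e
  let ?s = "setpc t (RdPtr i) (s\<lparr>loc := (loc s)(t := (loc s t)(i := Some (ge s)))\<rparr>)"
  assume a: "pc ?s r = RecFree E" "loc ?s u j = Some e"
  have r: "pc s r = RecFree E" using a(1) P by (auto simp: setpc_def split: if_splits)
  show "e \<in> E \<or> (\<forall>n\<in>set (rlist ?s r). rete ?s n < e)"
  proof (cases "u = t \<and> j = i")
    case True
    then have "e = ge s" using a(2) by (simp add: setpc_def)
    moreover have "inrec (pc s r)" using r by simp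
    ultimately show ?thesis using J9 unfolding J9_def by (simp add: setpc_def)
  next
    case False
    then have "loc s u j = Some e" using a(2) by (auto simp: setpc_def split: if_splits)
    then show ?thesis using J11 r unfolding J11_def by (simp add: setpc_def)
  qed
qed

lemma retire_J10:
  assumes J10: "J10 s" and J3: "J3 s" and P: "pc s t = InOp" and A: "nst s n = Alive"
  shows "J10 (setpc t (if R \<le> Suc (length (rlist s t)) then RecInc else InOp) (s\<lparr>nst := (nst s)(n := Retired), rete := (rete s)(n := ge s), rlist := (rlist s)(t := n # rlist s t)\<rparr>))"
  unfolding J10_def
proof (intro allI impI)
  fix r u j e
  let ?s = "setpc t (if R \<le> Suc (length (rlist s t)) then RecInc else InOp) (s\<lparr>nst := (nst s)(n := Retired), rete := (rete s)(n := ge s), rlist := (rlist s)(t := n # rlist s t)\<rparr>)"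
  assume a: "insig (pc ?s r)" "u \<noteq> r" "snap ?s r u < cnt ?s u" "loc ?s u j = Some e"
  have rt: "r \<noteq> t" using a(1) by (auto simp: setpc_def split: if_splits)
  then have "insig (pc s r)" using a(1) by (simp add: setpc_def)
  then have "shr s u j = Some e \<or> (\<forall>n\<in>set (rlist s r). rete s n < e)"
    using J10 a(2-4) unfolding J10_def by (simp add: setpc_def)
  moreover have "n \<notin> set (rlist s r)" using J3 A unfolding J3_def by auto
  ultimately show "shr ?s u j = Some e \<or> (\<forall>m\<in>set (rlist ?s r). rete ?s m < e)"
    using rt by (auto simp: setpc_def)
qed

lemma rec_inc_J9:
  assumes J3: "J3 s" and J9: "J9 s" and P: "pc s t = RecInc"
  shows "J9 (setpc t RecRecord (s\<lparr>ge := Suc (ge s)\<rparr>))"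
  unfolding J9_def
proof (intro allI impI ballI)
  fix r m
  let ?s = "setpc t RecRecord (s\<lparr>ge := Suc (ge s)\<rparr>)"
  assume a: "inrec (pc ?s r)" "m \<in> set (rlist ?s r)"
  have "rete s m \<le> ge s" using J3 a(2) unfolding J3_def by (simp add: setpc_def)
  then show "rete ?s m < ge ?s" by (simp add: setpc_def)
qed


lemma retire_J11:
  assumes J11: "J11 s" and J3: "J3 s" and P: "pc s t = InOp" and A: "nst s n = Alive"
  shows "J11 (setpc t (if R \<le> Suc (length (rlist s t)) then RecInc else InOp) (s\<lparr>nst := (nst s)(n := Retired), rete := (rete s)(n := ge s), rlist := (rlist s)(t := n # rlist s t)\<rparr>))"
  unfolding J11_def
proof (intro allI impI)
  fix r E u j e
  let ?s = "setpc t (if R \<le> Suc (length (rlist s t)) then RecInc else InOp) (s\<lparr>nst := (nst s)(n := Retired), rete := (rete s)(n := ge s), rlist := (rlist s)(t := n # rlist s t)\<rparr>)"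
  assume a: "pc ?s r = RecFree E" "loc ?s u j = Some e"
  have rt: "r \<noteq> t" using a(1) by (auto simp: setpc_def split: if_splits)
  then have "pc s r = RecFree E" using a(1) by (simp add: setpc_def)
  then have "e \<in> E \<or> (\<forall>n\<in>set (rlist s r). rete s n < e)"
    using J11 a(2) unfolding J11_def by (simp add: setpc_def)
  moreover have "n \<notin> set (rlist s r)" using J3 A unfolding J3_def by auto
  ultimately show "e \<in> E \<or> (\<forall>m\<in>set (rlist ?s r). rete ?s m < e)"
    using rt by (auto simp: setpc_def)
qed

lemma c_begin_op:
  fixes s :: "('t::finite, 'n, 'k::finite) hstate"
  assumes H: "hinv s" and P: "pc s t = Idle"
  shows "hinv (setpc t InOp s)"
  using H P unfolding hinv_def
  apply (elim conjE; intro conjI)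
  subgoal by (simp add: setpc_def)
  subgoal by (auto simp: setpc_def J1_def)
  subgoal by (auto simp: setpc_def J2_def)
  subgoal by (auto simp: setpc_def J3_def)
  subgoal by (auto simp: setpc_def J4_def)
  subgoal by (auto simp: setpc_def J5_def)
  subgoal by (auto simp: setpc_def J6_def)
  subgoal by (auto simp: setpc_def J7_def)
  subgoal by (auto simp: setpc_def J8_def)
  subgoal by (auto simp: setpc_def J9_def)
  subgoal by (auto simp: setpc_def J10_def)
  subgoal by (auto simp: setpc_def J11_def)
  done

lemma c_alloc:
  fixes s :: "('t::finite, 'n, 'k::finite) hstate"
  assumes H: "hinv s" and P: "pc s t = InOp" "nst s n = Unalloc"
  shows "hinv (s\<lparr>nst := (nst s)(n := Alive), birth := (birth s)(n := ge s)\<rparr>)"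
  using H P unfolding hinv_def
  apply (elim conjE; intro conjI)
  subgoal by (simp add: setpc_def)
  subgoal by (auto simp: setpc_def J1_def)
  subgoal by (auto simp: setpc_def J2_def)
  subgoal by (auto simp: setpc_def J3_def)
  subgoal by (auto simp: setpc_def J4_def)
  subgoal by (fastforce simp: J5_def)
  subgoal by (auto simp: setpc_def J6_def)
  subgoal by (auto simp: setpc_def J7_def)
  subgoal by (auto simp: setpc_def J8_def)
  subgoal by (auto simp: setpc_def J9_def)
  subgoal by (auto simp: setpc_def J10_def)
  subgoal by (auto simp: setpc_def J11_def)
  done

lemma c_start_read:
  fixes s :: "('t::finite, 'n, 'k::finite) hstate"
  assumes H: "hinv s" and P: "pc s t = InOp"
  shows "hinv (setpc t (RdPtr i) (s\<lparr>ref := (ref s)(t := (ref s t)(i := None))\<rparr>))"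
  using H P unfolding hinv_def
  apply (elim conjE; intro conjI)
  subgoal by (simp add: setpc_def)
  subgoal by (auto simp: setpc_def J1_def)
  subgoal by (auto simp: setpc_def J2_def)
  subgoal by (auto simp: setpc_def J3_def)
  subgoal by (auto simp: setpc_def J4_def)
  subgoal by (auto simp: setpc_def J5_def)
  subgoal by (auto simp: setpc_def J6_def)
  subgoal by (auto simp: setpc_def J7_def)
  subgoal by (auto simp: setpc_def J8_def)
  subgoal by (auto simp: setpc_def J9_def)
  subgoal by (auto simp: setpc_def J10_def)
  subgoal by (auto simp: setpc_def J11_def)
  done

lemma c_load_ptr_root:
  fixes s :: "('t::finite, 'n, 'k::finite) hstate"
  assumes H: "hinv s" and P: "pc s t = RdPtr i" "(p = None \<or> (\<exists>n. p = Some n \<and> nst s n = Alive))"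
  shows "hinv (setpc t (RdEp i p) s)"
  using H P unfolding hinv_def
  apply (elim conjE; intro conjI)
  subgoal by (simp add: setpc_def)
  subgoal by (auto simp: setpc_def J1_def)
  subgoal by (auto simp: setpc_def J2_def)
  subgoal by (auto simp: setpc_def J3_def)
  subgoal by (auto simp: setpc_def J4_def)
  subgoal by (auto simp: setpc_def J5_def)
  subgoal by (auto simp: setpc_def J6_def)
  subgoal by (auto simp: setpc_def J7_def J6_def)
  subgoal by (auto simp: setpc_def J8_def J1_def)
  subgoal by (auto simp: setpc_def J9_def)
  subgoal by (auto simp: setpc_def J10_def)
  subgoal by (auto simp: setpc_def J11_def)
  done

lemma c_load_ptr_node:
  fixes s :: "('t::finite, 'n, 'k::finite) hstate"
  assumes H: "hinv s" and P: "pc s t = RdPtr i" "ref s t j = Some m" "(p = None \<or> (\<exists>n. p = Some n \<and> nst s n = Alive))"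
  shows "hinv (setpc t (RdEp i p) (s\<lparr>uaf := (uaf s \<or> nst s m = Freed)\<rparr>))"
  using H P unfolding hinv_def
  apply (elim conjE; intro conjI)
  subgoal using H P unfolding hinv_def J5_def by (fastforce simp: setpc_def)
  subgoal by (auto simp: setpc_def J1_def)
  subgoal by (auto simp: setpc_def J2_def)
  subgoal by (auto simp: setpc_def J3_def)
  subgoal by (auto simp: setpc_def J4_def)
  subgoal by (auto simp: setpc_def J5_def)
  subgoal by (auto simp: setpc_def J6_def)
  subgoal by (auto simp: setpc_def J7_def J6_def)
  subgoal by (auto simp: setpc_def J8_def J1_def)
  subgoal by (auto simp: setpc_def J9_def)
  subgoal by (auto simp: setpc_def J10_def)
  subgoal by (auto simp: setpc_def J11_def)
  done

lemma c_load_epoch_ok: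
  fixes s :: "('t::finite, 'n, 'k::finite) hstate"
  assumes H: "hinv s" and P: "pc s t = RdEp i p" "loc s t i = Some (ge s)"
  shows "hinv (setpc t InOp (s\<lparr>ref := (ref s)(t := (ref s t)(i := p))\<rparr>))"
  using H P unfolding hinv_def
  apply (elim conjE; intro conjI)
  subgoal by (simp add: setpc_def)
  subgoal by (auto simp: setpc_def J1_def)
  subgoal by (auto simp: setpc_def J2_def)
  subgoal by (auto simp: setpc_def J3_def)
  subgoal by (auto simp: setpc_def J4_def)
  subgoal by (fastforce simp: setpc_def J5_def J8_def)
  subgoal by (auto simp: setpc_def J6_def)
  subgoal by (auto simp: setpc_def J7_def)
  subgoal by (auto simp: setpc_def J8_def)
  subgoal by (auto simp: setpc_def J9_def)
  subgoal by (auto simp: setpc_def J10_def)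
  subgoal by (auto simp: setpc_def J11_def)
  done

lemma c_load_epoch_retry:
  fixes s :: "('t::finite, 'n, 'k::finite) hstate"
  assumes H: "hinv s" and P: "pc s t = RdEp i p" "loc s t i \<noteq> Some (ge s)"
  shows "hinv (setpc t (RdPtr i) (s\<lparr>loc := (loc s)(t := (loc s t)(i := Some (ge s)))\<rparr>))"
  using H P unfolding hinv_def
  apply (elim conjE; intro conjI)
  subgoal by (simp add: setpc_def)
  subgoal by (auto simp: setpc_def J1_def)
  subgoal by (auto simp: setpc_def J2_def)
  subgoal by (auto simp: setpc_def J3_def)
  subgoal by (auto simp: setpc_def J4_def)
  subgoal by (auto simp: setpc_def J5_def J7_def)
  subgoal by (auto simp: setpc_def J6_def J7_def)
  subgoal by (auto simp: setpc_def J7_def)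
  subgoal by (auto simp: setpc_def J8_def)
  subgoal by (auto simp: setpc_def J9_def)
  subgoal by (auto simp: setpc_def J10_def J9_def dest!: insig_inrec)
  subgoal using P by (intro retry_J11) auto
  done

lemma c_access:
  fixes s :: "('t::finite, 'n, 'k::finite) hstate"
  assumes H: "hinv s" and P: "pc s t = InOp" "ref s t i = Some n"
  shows "hinv (s\<lparr>uaf := (uaf s \<or> nst s n = Freed)\<rparr>)"
  using H P unfolding hinv_def
  apply (elim conjE; intro conjI)
  subgoal using H P unfolding hinv_def J5_def by fastforce
  subgoal by (auto simp: setpc_def J1_def)
  subgoal by (auto simp: setpc_def J2_def)
  subgoal by (auto simp: setpc_def J3_def)
  subgoal by (auto simp: setpc_def J4_def)
  subgoal by (auto simp: setpc_def J5_def)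
  subgoal by (auto simp: setpc_def J6_def)
  subgoal by (auto simp: setpc_def J7_def)
  subgoal by (auto simp: setpc_def J8_def)
  subgoal by (auto simp: setpc_def J9_def)
  subgoal by (auto simp: setpc_def J10_def)
  subgoal by (auto simp: setpc_def J11_def)
  done

lemma c_retire:
  fixes s :: "('t::finite, 'n, 'k::finite) hstate"
  assumes H: "hinv s" and P: "pc s t = InOp" "nst s n = Alive"
  shows "hinv (setpc t (if R \<le> Suc (length (rlist s t)) then RecInc else InOp) (s\<lparr>nst := (nst s)(n := Retired), rete := (rete s)(n := ge s), rlist := (rlist s)(t := n # rlist s t)\<rparr>))"
  using H P unfolding hinv_def
  apply (elim conjE; intro conjI)
  subgoal by (simp add: setpc_def)
  subgoal by (auto simp: setpc_def J1_def)
  subgoal by (auto simp: setpc_def J2_def)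
  subgoal by (auto simp: setpc_def J3_def)
  subgoal by (auto simp: setpc_def J4_def J3_def)
  subgoal by (fastforce simp: setpc_def J5_def J2_def)
  subgoal by (auto simp: setpc_def J6_def)
  subgoal by (auto simp: setpc_def J7_def)
  subgoal by (auto simp: setpc_def J8_def)
  subgoal by (auto simp: setpc_def J9_def J3_def)
  subgoal using P by (intro retire_J10) auto
  subgoal using P by (intro retire_J11) auto
  done

lemma c_end_op:
  fixes s :: "('t::finite, 'n, 'k::finite) hstate"
  assumes H: "hinv s" and P: "pc s t = InOp"
  shows "hinv (setpc t Idle (s\<lparr>loc := (loc s)(t := (\<lambda>_. None)), ref := (ref s)(t := (\<lambda>_. None))\<rparr>))"
  using H P unfolding hinv_def
  apply (elim conjE; intro conjI)
  subgoal by (simp add: setpc_def)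
  subgoal by (auto simp: setpc_def J1_def)
  subgoal by (auto simp: setpc_def J2_def)
  subgoal by (auto simp: setpc_def J3_def)
  subgoal by (auto simp: setpc_def J4_def)
  subgoal by (auto simp: setpc_def J5_def)
  subgoal by (auto simp: setpc_def J6_def)
  subgoal by (auto simp: setpc_def J7_def)
  subgoal by (auto simp: setpc_def J8_def)
  subgoal by (auto simp: setpc_def J9_def)
  subgoal by (auto simp: setpc_def J10_def)
  subgoal by (auto simp: setpc_def J11_def)
  done

lemma c_rec_inc:
  fixes s :: "('t::finite, 'n, 'k::finite) hstate"
  assumes H: "hinv s" and P: "pc s t = RecInc"
  shows "hinv (setpc t RecRecord (s\<lparr>ge := Suc (ge s)\<rparr>))"
  using H P unfolding hinv_def
  apply (elim conjE; intro conjI)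
  subgoal by (simp add: setpc_def)
  subgoal by (auto simp: setpc_def J1_def)
  subgoal by (force simp: setpc_def J2_def)
  subgoal by (force simp: setpc_def J3_def)
  subgoal by (auto simp: setpc_def J4_def)
  subgoal by (auto simp: setpc_def J5_def)
  subgoal by (auto simp: setpc_def J6_def)
  subgoal by (auto simp: setpc_def J7_def)
  subgoal by (force simp: setpc_def J8_def J2_def)
  subgoal using P by (intro rec_inc_J9) auto
  subgoal by (auto simp: setpc_def J10_def)
  subgoal by (auto simp: setpc_def J11_def)
  done

lemma c_rec_record:
  fixes s :: "('t::finite, 'n, 'k::finite) hstate"
  assumes H: "hinv s" and P: "pc s t = RecRecord"
  shows "hinv (setpc t (RecSignal (UNIV - {t})) (s\<lparr>snap := (snap s)(t := cnt s)\<rparr>))"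
  using H P unfolding hinv_def
  apply (elim conjE; intro conjI)
  subgoal by (simp add: setpc_def)
  subgoal by (auto simp: setpc_def J1_def)
  subgoal by (auto simp: setpc_def J2_def)
  subgoal by (auto simp: setpc_def J3_def)
  subgoal by (auto simp: setpc_def J4_def)
  subgoal by (auto simp: setpc_def J5_def)
  subgoal by (auto simp: setpc_def J6_def)
  subgoal by (auto simp: setpc_def J7_def)
  subgoal by (auto simp: setpc_def J8_def)
  subgoal by (auto simp: setpc_def J9_def; metis inrec.simps)
  subgoal by (auto simp: setpc_def J10_def)
  subgoal by (auto simp: setpc_def J11_def)
  done

lemma c_rec_signal:
  fixes s :: "('t::finite, 'n, 'k::finite) hstate"
  assumes H: "hinv s" and P: "pc s t = RecSignal U" "u \<in> U"
  shows "hinv (setpc t (RecSignal (U - {u})) (s\<lparr>pend := (pend s)(u := True)\<rparr>))"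
  using H P unfolding hinv_def
  apply (elim conjE; intro conjI)
  subgoal by (simp add: setpc_def)
  subgoal by (auto simp: setpc_def J1_def)
  subgoal by (auto simp: setpc_def J2_def)
  subgoal by (auto simp: setpc_def J3_def)
  subgoal by (auto simp: setpc_def J4_def)
  subgoal by (auto simp: setpc_def J5_def)
  subgoal by (auto simp: setpc_def J6_def)
  subgoal by (auto simp: setpc_def J7_def)
  subgoal by (auto simp: setpc_def J8_def)
  subgoal by (auto simp: setpc_def J9_def; metis inrec.simps)
  subgoal by (auto simp: setpc_def J10_def)
  subgoal by (auto simp: setpc_def J11_def)
  done

lemma c_rec_signal_done:
  fixes s :: "('t::finite, 'n, 'k::finite) hstate"
  assumes H: "hinv s" and P: "pc s t = RecSignal {}"
  shows "hinv (setpc t RecWait s)"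
  using H P unfolding hinv_def
  apply (elim conjE; intro conjI)
  subgoal by (simp add: setpc_def)
  subgoal by (auto simp: setpc_def J1_def)
  subgoal by (auto simp: setpc_def J2_def)
  subgoal by (auto simp: setpc_def J3_def)
  subgoal by (auto simp: setpc_def J4_def)
  subgoal by (auto simp: setpc_def J5_def)
  subgoal by (auto simp: setpc_def J6_def)
  subgoal by (auto simp: setpc_def J7_def)
  subgoal by (auto simp: setpc_def J8_def)
  subgoal by (auto simp: setpc_def J9_def; metis inrec.simps)
  subgoal by (auto simp: setpc_def J10_def)
  subgoal by (auto simp: setpc_def J11_def)
  done

lemma c_rec_wait:
  fixes s :: "('t::finite, 'n, 'k::finite) hstate"
  assumes H: "hinv s" and P: "pc s t = RecWait" "(\<forall>u. u \<noteq> t \<longrightarrow> snap s t u < cnt s u)"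
  shows "hinv (setpc t (RecFree (collected t s)) s)"
  using H P unfolding hinv_def
  apply (elim conjE; intro conjI)
  subgoal by (simp add: setpc_def)
  subgoal by (auto simp: setpc_def J1_def)
  subgoal by (auto simp: setpc_def J2_def)
  subgoal by (auto simp: setpc_def J3_def)
  subgoal by (auto simp: setpc_def J4_def)
  subgoal by (auto simp: setpc_def J5_def)
  subgoal by (auto simp: setpc_def J6_def)
  subgoal by (auto simp: setpc_def J7_def)
  subgoal by (auto simp: setpc_def J8_def)
  subgoal by (auto simp: setpc_def J9_def; metis inrec.simps)
  subgoal by (auto simp: setpc_def J10_def)
  subgoal using P by (intro rec_wait_J11) auto
  done

lemma c_rec_free:
  fixes s :: "('t::finite, 'n, 'k::finite) hstate"
  assumes H: "hinv s" and P: "pc s t = RecFree E"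
  shows "hinv (setpc t InOp (s\<lparr>nst := (\<lambda>n. if n \<in> set (rlist s t) \<and> freeable E s n then Freed else nst s n), rlist := (rlist s)(t := filter (\<lambda>n. \<not> freeable E s n) (rlist s t))\<rparr>))"
  using H P unfolding hinv_def
  apply (elim conjE; intro conjI)
  subgoal by (simp add: setpc_def)
  subgoal by (auto simp: setpc_def J1_def J3_def)
  subgoal by (auto simp: setpc_def J2_def)
  subgoal by (auto simp: setpc_def J3_def J4_def)
  subgoal by (auto simp: setpc_def J4_def)
  subgoal using P by (intro rec_free_J5) auto
  subgoal by (auto simp: setpc_def J6_def)
  subgoal by (auto simp: setpc_def J7_def)
  subgoal using P by (intro rec_free_J8) auto
  subgoal by (auto simp: setpc_def J9_def; metis inrec.simps)
  subgoal by (auto simp: setpc_def J10_def)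
  subgoal by (auto simp: setpc_def J11_def)
  done

lemma c_handler:
  fixes s :: "('t::finite, 'n, 'k::finite) hstate"
  assumes H: "hinv s" and P: "pend s u"
  shows "hinv (s\<lparr>shr := (shr s)(u := loc s u), cnt := (cnt s)(u := Suc (cnt s u)), pend := (pend s)(u := False)\<rparr>)"
  using H P unfolding hinv_def
  apply (elim conjE; intro conjI)
  subgoal by (simp add: setpc_def)
  subgoal by (auto simp: setpc_def J1_def)
  subgoal by (auto simp: setpc_def J2_def)
  subgoal by (auto simp: setpc_def J3_def)
  subgoal by (auto simp: setpc_def J4_def)
  subgoal by (auto simp: setpc_def J5_def)
  subgoal by (auto simp: setpc_def J6_def)
  subgoal by (auto simp: setpc_def J7_def)
  subgoal by (auto simp: setpc_def J8_def)
  subgoal by (auto simp: setpc_def J9_def)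
  subgoal by (auto simp: setpc_def J10_def)
  subgoal by (auto simp: setpc_def J11_def)
  done

lemma inv_step: "hstep R s s' \<Longrightarrow> hinv s \<Longrightarrow> hinv s'"
  by (induction rule: hstep.induct)
     (erule c_begin_op, assumption+, erule c_alloc, assumption+, erule c_start_read, assumption+, erule c_load_ptr_root, assumption+, erule c_load_ptr_node, assumption+, erule c_load_epoch_ok, assumption+, erule c_load_epoch_retry, assumption+, erule c_access, assumption+, erule c_retire, assumption+, erule c_end_op, assumption+, erule c_rec_inc, assumption+, erule c_rec_record, assumption+, erule c_rec_signal, assumption+, erule c_rec_signal_done, assumption+, erule c_rec_wait, assumption+, erule c_rec_free, assumption+, erule c_handler, assumption+)

theorem mainTheorem9:
  fixes R :: nat and s :: "('t::finite, 'n, 'k::finite) hstate"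
  assumes "reachable R s"
  shows "\<not> uaf s"
proof -
  have "(hstep R)\<^sup>*\<^sup>* hinit s" using assms by (simp add: reachable_def)
  then have "hinv s"
    by (induction rule: rtranclp_induct) (auto intro: inv_init inv_step)
  then show ?thesis by (simp add: hinv_def)
qed

end
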